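(* For all parameter values $\alpha_L,\alpha_R,\mu_L,\mu_R,\gamma_{RL},\gamma_{LR}>0$ (no symmetry assumed), the system \[ \dot L=\alpha_L L C-\mu_L L+\gamma_{RL} R C,\qquad \dot R=\alpha_R R C-\mu_R R+\gamma_{LR} L C,\qquad C=1-L-R, \] has no closed (periodic) orbits in the interior of the simplex $\Sigma=\{(L,R): L\ge0,\ R\ge0,\ L+R\le1\}$. *)

theory Defs
  imports Complex_Main
begin

definition fieldL :: "real \<Rightarrow> real \<Rightarrow> real \<Rightarrow> real \<Rightarrow> real \<Rightarrow> real" where
  "fieldL aL muL gRL L R = aL * L * (1 - L - R) - muL * L + gRL * R * (1 - L - R)"

definition fieldR :: "real \<Rightarrow> real \<Rightarrow> real \<Rightarrow> real \<Rightarrow> real \<Rightarrow> real" where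
  "fieldR aR muR gLR L R = aR * R * (1 - L - R) - muR * R + gLR * L * (1 - L - R)"

definition in_simplex_interior :: "real \<Rightarrow> real \<Rightarrow> bool" where
  "in_simplex_interior L R \<longleftrightarrow> L > 0 \<and> R > 0 \<and> L + R < 1"

definition closed_orbit_in_interior ::
  "real \<Rightarrow> real \<Rightarrow> real \<Rightarrow> real \<Rightarrow> real \<Rightarrow> real \<Rightarrow> (real \<Rightarrow> real) \<Rightarrow> (real \<Rightarrow> real) \<Rightarrow> bool" where
  "closed_orbit_in_interior aL aR muL muR gRL gLR L R \<longleftrightarrow>
     (\<forall>t. (L has_real_derivative fieldL aL muL gRL (L t) (R t)) (at t)) \<and>
     (\<forall>t. (R has_real_derivative fieldR aR muR gLR (L t) (R t)) (at t)) \<and>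
     (\<exists>T>0. \<forall>t. L (t + T) = L t \<and> R (t + T) = R t) \<and>
     (\<exists>t1 t2. (L t1, R t1) \<noteq> (L t2, R t2)) \<and>
     (\<forall>t. in_simplex_interior (L t) (R t))"

end

theory Submission imports Defs "HOL-Analysis.Analysis" begin

lemma periodic_nat:
  assumes "\<forall>t::real. f (t + T) = (f t::real)"
  shows "f (t + real n * T) = f t"
proof (induction n)
  case (Suc n)
  have "f (t + real (Suc n) * T) = f ((t + real n * T) + T)" by (simp add: algebra_simps)
  also have "\<dots> = f t" using assms Suc by simp
  finally show ?case .
qed simp

lemma periodic_int:
  assumes "\<forall>t::real. f (t + T) = (f t::real)"
  shows "f (t + real_of_int k * T) = f t"
proof -
  have "\<exists>n. k = int n \<or> k = - int n" by presburger
  then obtain n where "k = int n \<or> k = - int n" by blast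
  then show ?thesis
  proof
    assume "k = int n"
    then show ?thesis using periodic_nat[OF assms, of t n] by simp
  next
    assume k: "k = - int n"
    have "f ((t - real n * T) + real n * T) = f (t - real n * T)" by (rule periodic_nat[OF assms])
    then show ?thesis using k by simp
  qed
qed

lemma periodic_reduce:
  assumes "\<forall>t::real. f (t + T) = (f t::real)" "T > 0"
  shows "\<exists>s\<in>{a..a+T}. f t = f s"
proof -
  define k where "k = \<lfloor>(t - a)/T\<rfloor>"
  have "real_of_int k \<le> (t-a)/T" "(t-a)/T < real_of_int k + 1" unfolding k_def by linarith+
  then have 1: "real_of_int k * T \<le> t - a" "t - a < (real_of_int k + 1) * T"
    using assms(2) by (simp_all add: field_simps)
  have "f (t + real_of_int (-k) * T) = f t" using periodic_int[OF assms(1)] by blast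
  moreover have "t + real_of_int (-k) * T \<in> {a..a+T}" using 1 by (simp add: algebra_simps)
  ultimately show ?thesis by metis
qed

lemma periodic_max:
  assumes "\<forall>t::real. f (t + T) = (f t::real)" "T > 0" "\<forall>t. isCont f t"
  shows "\<exists>m. \<forall>t. f t \<le> f m"
proof -
  have "\<exists>x\<in>{0..T}. \<forall>y\<in>{0..T}. f y \<le> f x"
    by (rule continuous_attains_sup) (use assms in \<open>auto intro: continuous_at_imp_continuous_on simp: compact_Icc\<close>)
  then obtain m where m: "\<forall>y\<in>{0..T}. f y \<le> f m" by blast
  show ?thesis
  proof (intro exI allI)
    fix t
    obtain s where "s \<in> {0..T}" "f t = f s" using periodic_reduce[OF assms(1,2), of 0 t] by auto
    then show "f t \<le> f m" using m by auto
  qed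
qed

lemma periodic_min:
  assumes "\<forall>t::real. f (t + T) = (f t::real)" "T > 0" "\<forall>t. isCont f t"
  shows "\<exists>m. \<forall>t. f m \<le> f t"
proof -
  have "\<exists>m. \<forall>t. (\<lambda>t. - f t) t \<le> (\<lambda>t. - f t) m"
    by (rule periodic_max) (use assms in \<open>auto intro: continuous_intros\<close>)
  then show ?thesis by auto
qed

lemma deriv_at_max:
  assumes "(f has_real_derivative l) (at m)" "\<forall>t. f t \<le> f m"
  shows "l = 0"
  using DERIV_local_max[OF assms(1), of 1] assms(2) by auto

lemma deriv_at_min:
  assumes "(f has_real_derivative l) (at m)" "\<forall>t. f m \<le> f t"
  shows "l = 0"
  using DERIV_local_min[OF assms(1), of 1] assms(2) by auto

lemma periodic_const:
  assumes "\<forall>t::real. f (t + T) = (f t::real)" "T > 0" "\<And>t. (f has_real_derivative f' t) (at t)"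
    and "\<forall>t. f' t \<le> 0"
  shows "f t = f s"
proof -
  have noninc: "f b \<le> f a" if "a \<le> b" for a b
    using DERIV_nonpos_imp_nonincreasing[OF that] assms(3,4) by blast
  have le: "f a \<le> f b" for a b
  proof -
    obtain n :: nat where "real n > (b - a) / T" using reals_Archimedean2 by blast
    then have "a + real n * T \<ge> b" using assms(2) by (simp add: field_simps)
    then have "f (a + real n * T) \<le> f b" using noninc by blast
    then show ?thesis using periodic_nat[OF assms(1)] by simp
  qed
  show ?thesis using le[of t s] le[of s t] by simp
qed


locale redsys =
  fixes aL aR muL muR gRL gLR :: real
  assumes pos: "aL > 0" "aR > 0" "muL > 0" "muR > 0" "gRL > 0" "gLR > 0"
    and mu_le: "muR \<le> muL"
begin

definition "dd = muL - muR"
definition "qt y = gRL*(1-y)^2 + (aL-aR)*y*(1-y) - gLR*y^2"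
definition "rr y = gRL*(1-y)/y + (aL-aR) - gLR*y/(1-y)"
definition "be y = aR + gRL + (aL+gLR-aR-gRL)*y"
definition "et y = muR + dd*y"
definition "Xf y c = c * qt y - dd*y*(1-y)"
definition "Yf y c = -(1-c)*(c * be y - et y)"
definition "DD = muR*(aL+gLR) - muL*(aR+gRL)"

lemma dd_nonneg: "dd \<ge> 0" using mu_le by (simp add: dd_def)

lemma qt_rr: "0 < y \<Longrightarrow> y < 1 \<Longrightarrow> qt y = y*(1-y)*rr y"
  by (simp add: qt_def rr_def field_simps power2_eq_square)

lemma rr_strict: assumes "0 < a" "a < b" "b < 1" shows "rr b < rr a"
proof -
  have "rr a - rr b = (b - a) * (gRL/(a*b) + gLR/((1-a)*(1-b)))"
  proof -
    have h: "a \<noteq> 0" "b \<noteq> 0" "1 - a \<noteq> 0" "1 - b \<noteq> 0" using assms by auto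
    have e1: "(1-a)/a - (1-b)/b = (b-a)/(a*b)" using h by (simp add: field_simps)
    have e2: "a/(1-a) - b/(1-b) = (a-b)/((1-a)*(1-b))" using h by (simp add: field_simps)
    have "rr a - rr b = gRL*((1-a)/a - (1-b)/b) - gLR*(a/(1-a) - b/(1-b))"
      unfolding rr_def by (simp add: algebra_simps)
    also have "\<dots> = (b - a) * (gRL/(a*b) + gLR/((1-a)*(1-b)))" unfolding e1 e2
      by (simp add: diff_divide_distrib add_divide_distrib right_diff_distrib distrib_left mult.commute mult.left_commute)
    finally show ?thesis .
  qed
  moreover have "gRL/(a*b) + gLR/((1-a)*(1-b)) > 0" using assms pos by (intro add_pos_pos) auto
  ultimately show ?thesis using assms by (smt (verit) mult_pos_pos)
qed

lemma rr_anti: assumes "0 < a" "a \<le> b" "b < 1" shows "rr b \<le> rr a"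
  using rr_strict[of a b] assms by (cases "a = b") auto

lemma be_pos: assumes "0 \<le> y" "y \<le> 1" shows "be y > 0"
proof -
  have "be y = (aR+gRL)*(1-y) + (aL+gLR)*y" by (simp add: be_def algebra_simps)
  moreover have "(aR+gRL)*(1-y) \<ge> 0" "(aL+gLR)*y \<ge> 0" "(aR+gRL)*(1-y) + (aL+gLR)*y > 0"
    using assms pos
    by (auto intro!: mult_nonneg_nonneg) (cases "y = 1"; simp add: add_pos_nonneg)
  ultimately show ?thesis by simp
qed

definition "Xx y c = c*(-2*gRL*(1-y) + (aL-aR)*(1-2*y) - 2*gLR*y) - dd*(1-2*y)"
definition "Yc y c = (c*be y - et y) - (1-c)*be y"
definition "Yx y c = -(1-c)*(c*(aL+gLR-aR-gRL) - dd)"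

lemma isCont_rr: assumes "0 < y" "y < 1" shows "isCont rr y"
proof -
  have e: "rr = (\<lambda>y. gRL*(1-y)/y + (aL-aR) - gLR*y/(1-y))" by (rule ext) (simp add: rr_def)
  show ?thesis unfolding e by (intro continuous_intros) (use assms in auto)
qed

lemma isCont_qt: "isCont qt y"
proof -
  have e: "qt = (\<lambda>y. gRL*(1-y)^2 + (aL-aR)*y*(1-y) - gLR*y^2)" by (rule ext) (simp add: qt_def)
  show ?thesis unfolding e by (intro continuous_intros)
qed

lemma isCont_be: "isCont be y"
proof -
  have e: "be = (\<lambda>y. aR + gRL + (aL+gLR-aR-gRL)*y)" by (rule ext) (simp add: be_def)
  show ?thesis unfolding e by (intro continuous_intros)
qed

lemma isCont_et: "isCont et y"
proof -
  have e: "et = (\<lambda>y. muR + dd*y)" by (rule ext) (simp add: et_def)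
  show ?thesis unfolding e by (intro continuous_intros)
qed

lemma dXf: assumes "(u has_real_derivative u') (at t)" "(v has_real_derivative v') (at t)"
  shows "((\<lambda>t. Xf (u t) (v t)) has_real_derivative Xx (u t) (v t) * u' + qt (u t) * v') (at t)"
  unfolding Xf_def qt_def
  apply (rule derivative_eq_intros assms refl)+
  unfolding Xx_def by (simp add: algebra_simps)

lemma dYf: assumes "(u has_real_derivative u') (at t)" "(v has_real_derivative v') (at t)"
  shows "((\<lambda>t. Yf (u t) (v t)) has_real_derivative Yx (u t) (v t) * u' + Yc (u t) (v t) * v') (at t)"
  unfolding Yf_def be_def et_def
  apply (rule derivative_eq_intros assms refl)+
  unfolding Yx_def Yc_def be_def et_def by (simp add: algebra_simps)

lemma dPg: assumes "(u has_real_derivative Xf (u t) (v t)) (at t)" "(v has_real_derivative Yf (u t) (v t)) (at t)"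
  shows "((\<lambda>t. Xf (u t) (v t) * Yf (u t) (v t)) has_real_derivative
   (Xx (u t) (v t) + Yc (u t) (v t)) * (Xf (u t) (v t) * Yf (u t) (v t))
   + qt (u t) * (Yf (u t) (v t))^2 + Yx (u t) (v t) * (Xf (u t) (v t))^2) (at t)"
proof -
  have "((\<lambda>t. Xf (u t) (v t) * Yf (u t) (v t)) has_real_derivative
     Xf (u t) (v t) * (Yx (u t) (v t) * Xf (u t) (v t) + Yc (u t) (v t) * Yf (u t) (v t)) +
     (Xx (u t) (v t) * Xf (u t) (v t) + qt (u t) * Yf (u t) (v t)) * Yf (u t) (v t)) (at t)"
    by (rule DERIV_mult'[OF dXf[OF assms] dYf[OF assms]])
  then show ?thesis by (simp add: power2_eq_square algebra_simps)
qed

lemma poly_x: "(1-y) * fieldL aL muL gRL (y * s) ((1 - y) * s) - y * fieldR aR muR gLR (y * s) ((1 - y) * s) = s * Xf y (1 - s)"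
  unfolding fieldL_def fieldR_def Xf_def qt_def dd_def by (simp add: algebra_simps power2_eq_square)

lemma field_x: assumes "l + r \<noteq> 0"
  shows "(fieldL aL muL gRL l r * (l + r) - l * (fieldL aL muL gRL l r + fieldR aR muR gLR l r)) / ((l + r) * (l + r))
     = Xf (l / (l + r)) (1 - l - r)"
proof -
  define s where "s = l + r"
  define y where "y = l / s"
  have s: "s \<noteq> 0" using assms s_def by simp
  have l: "l = y * s" and r: "r = (1 - y) * s" using s unfolding y_def s_def by (auto simp: field_simps)
  have "fieldL aL muL gRL l r * s - l * (fieldL aL muL gRL l r + fieldR aR muR gLR l r)
     = s * ((1-y) * fieldL aL muL gRL (y * s) ((1 - y) * s) - y * fieldR aR muR gLR (y * s) ((1 - y) * s))"
    unfolding l r by (simp add: algebra_simps)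
  also have "\<dots> = s * (s * Xf y (1 - s))" unfolding poly_x ..
  finally have "fieldL aL muL gRL l r * s - l * (fieldL aL muL gRL l r + fieldR aR muR gLR l r) = s * s * Xf y (1 - s)" by simp
  then show ?thesis using s unfolding s_def[symmetric] y_def by (simp add: diff_diff_eq s_def)
qed

lemma field_C: "- (fieldL aL muL gRL l r + fieldR aR muR gLR l r) = Yf (l / (l + r)) (1 - l - r)"
  if "l + r \<noteq> 0"
proof -
  define s where "s = l + r"
  define y where "y = l / s"
  have s: "s \<noteq> 0" using that s_def by simp
  have l: "l = y * s" and r: "r = (1 - y) * s" using s unfolding y_def s_def by (auto simp: field_simps)
  have "- (fieldL aL muL gRL (y * s) ((1 - y) * s) + fieldR aR muR gLR (y * s) ((1 - y) * s)) = Yf y (1 - s)"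
    unfolding fieldL_def fieldR_def Yf_def be_def et_def dd_def by (simp add: algebra_simps)
  then show ?thesis using l r unfolding y_def s_def by (simp add: diff_diff_eq)
qed

end


locale orb = redsys +
  fixes x C :: "real \<Rightarrow> real" and T :: real
  assumes dx: "\<And>t. (x has_real_derivative Xf (x t) (C t)) (at t)"
    and dC: "\<And>t. (C has_real_derivative Yf (x t) (C t)) (at t)"
    and Tpos: "T > 0" and perx: "\<forall>t. x (t + T) = x t" and perC: "\<forall>t. C (t + T) = C t"
    and x0: "\<And>t. 0 < x t" and x1: "\<And>t. x t < 1" and C0: "\<And>t. 0 < C t" and C1: "\<And>t. C t < 1"
begin

lemma contx: "isCont x t" using dx DERIV_isCont by blast
lemma contC: "isCont C t" using dC DERIV_isCont by blast

lemma Y0: assumes "Yf (x t) (C t) = 0" shows "C t * be (x t) = et (x t)"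
  using assms C1[of t] by (simp add: Yf_def)

lemma X0: assumes "Xf (x t) (C t) = 0" shows "C t * rr (x t) = dd"
proof -
  have "C t * qt (x t) = dd * x t * (1 - x t)" using assms by (simp add: Xf_def)
  then have "x t * (1 - x t) * (C t * rr (x t) - dd) = 0"
    using qt_rr[OF x0 x1] by (simp add: algebra_simps)
  then show ?thesis using x0[of t] x1[of t] by simp
qed

lemma const_from_deriv0:
  assumes "\<forall>t. Xf (x t) (C t) = 0" "\<forall>t. Yf (x t) (C t) = 0"
  shows "x t = x s \<and> C t = C s"
  using DERIV_isconst_all[of x t s] DERIV_isconst_all[of C t s] dx dC assms by metis


lemma dP: "((\<lambda>t. Xf (x t) (C t) * Yf (x t) (C t)) has_real_derivative
   (Xx (x t) (C t) + Yc (x t) (C t)) * (Xf (x t) (C t) * Yf (x t) (C t))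
   + qt (x t) * (Yf (x t) (C t))^2 + Yx (x t) (C t) * (Xf (x t) (C t))^2) (at t)"
  by (rule dPg[OF dx dC])

lemma extremes: "\<exists>tM tm sM sm. (\<forall>t. x t \<le> x tM) \<and> (\<forall>t. x tm \<le> x t) \<and> (\<forall>t. C t \<le> C sM)
   \<and> (\<forall>t. C sm \<le> C t) \<and> Xf (x tM) (C tM) = 0 \<and> Xf (x tm) (C tm) = 0
   \<and> Yf (x sM) (C sM) = 0 \<and> Yf (x sm) (C sm) = 0"
proof -
  obtain tM where tM: "\<forall>t. x t \<le> x tM" using periodic_max[OF perx Tpos] contx by blast
  obtain tm where tm: "\<forall>t. x tm \<le> x t" using periodic_min[OF perx Tpos] contx by blast
  obtain sM where sM: "\<forall>t. C t \<le> C sM" using periodic_max[OF perC Tpos] contC by blast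
  obtain sm where sm: "\<forall>t. C sm \<le> C t" using periodic_min[OF perC Tpos] contC by blast
  show ?thesis using tM tm sM sm deriv_at_max[OF dx tM] deriv_at_min[OF dx tm]
      deriv_at_max[OF dC sM] deriv_at_min[OF dC sm] by blast
qed

lemma case_d0: assumes "dd = 0" shows "x t = x s \<and> C t = C s"
proof -
  obtain tM tm sM sm where E: "\<forall>t. x t \<le> x tM" "\<forall>t. x tm \<le> x t" "\<forall>t. C t \<le> C sM"
    "\<forall>t. C sm \<le> C t" "Xf (x tM) (C tM) = 0" "Xf (x tm) (C tm) = 0"
    "Yf (x sM) (C sM) = 0" "Yf (x sm) (C sm) = 0" using extremes by blast
  have "C tM * rr (x tM) = 0" using X0[OF E(5)] assms by simp
  then have r1: "rr (x tM) = 0" using C0[of tM] by simp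
  have "C tm * rr (x tm) = 0" using X0[OF E(6)] assms by simp
  then have r2: "rr (x tm) = 0" using C0[of tm] by simp
  have "x tm = x tM"
  proof (rule ccontr)
    assume "x tm \<noteq> x tM"
    then have "x tm < x tM" using E(2) by (simp add: order_less_le)
    then show False using rr_strict[OF x0 _ x1, of tm tM] r1 r2 by simp
  qed
  then have xc: "\<And>t. x t = x tM" using E(1,2) by (metis order_antisym)
  have "C sM * be (x tM) = et (x tM)" "C sm * be (x tM) = et (x tM)"
    using Y0[OF E(7)] Y0[OF E(8)] xc by metis+
  then have "C sM * be (x tM) = C sm * be (x tM)" by simp
  then have "C sM = C sm" using be_pos[of "x tM"] x0[of tM] x1[of tM] by simp
  then have "\<And>t. C t = C sM" using E(3,4) by (metis order_antisym)
  then show ?thesis using xc by metis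
qed

lemma qpos: assumes "dd > 0" shows "qt (x t) > 0"
proof -
  obtain tM where E: "\<forall>t. x t \<le> x tM" "Xf (x tM) (C tM) = 0" using extremes by blast
  have "C tM * rr (x tM) = dd" using X0[OF E(2)] .
  then have "rr (x tM) > 0" using assms C0[of tM] by (metis zero_less_mult_pos)
  then have "rr (x t) > 0" using rr_anti[OF x0 E(1)[rule_format, of t] x1] by simp
  then show ?thesis using qt_rr[OF x0 x1] x0[of t] x1[of t] by simp
qed

lemma Psi_val: assumes "c * be y = et y" shows "(c*(aL+gLR-aR-gRL) - dd) * be y = DD"
proof -
  have "(c*(aL+gLR-aR-gRL) - dd) * be y = (aL+gLR-aR-gRL) * (c * be y) - dd * be y"
    by (simp add: algebra_simps)
  also have "\<dots> = DD" unfolding assms by (simp add: et_def be_def DD_def dd_def algebra_simps)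
  finally show ?thesis .
qed


lemma case_coop: assumes "dd > 0" "DD < 0" shows "x t = x s \<and> C t = C s"
proof -
  obtain tM tm sM sm where E: "\<forall>t. x t \<le> x tM" "\<forall>t. x tm \<le> x t" "\<forall>t. C t \<le> C sM"
    "\<forall>t. C sm \<le> C t" "Xf (x tM) (C tM) = 0" "Xf (x tm) (C tm) = 0"
    "Yf (x sM) (C sM) = 0" "Yf (x sm) (C sm) = 0" using extremes by blast
  define k where "k = aL+gLR-aR-gRL"
  have p1: "C sM * k - dd < 0"
  proof -
    have "(C sM * k - dd) * be (x sM) < 0" using Psi_val[OF Y0[OF E(7)]] assms k_def by simp
    then show ?thesis using be_pos[of "x sM"] x0[of sM] x1[of sM] by (simp add: mult_less_0_iff)
  qed
  have p2: "C sm * k - dd < 0"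
  proof -
    have "(C sm * k - dd) * be (x sm) < 0" using Psi_val[OF Y0[OF E(8)]] assms k_def by simp
    then show ?thesis using be_pos[of "x sm"] x0[of sm] x1[of sm] by (simp add: mult_less_0_iff)
  qed
  have Yxpos: "Yx (x t) (C t) > 0" for t
  proof -
    have "C t * k - dd < 0"
    proof (cases "k \<ge> 0")
      case True
      then have "C t * k \<le> C sM * k" using E(3) by (simp add: mult_right_mono)
      then show ?thesis using p1 by simp
    next
      case False
      then have "C t * k \<le> C sm * k" using E(4) by (simp add: mult_right_mono_neg)
      then show ?thesis using p2 by simp
    qed
    then have "0 < (1 - C t) * (dd - C t * k)" using C1[of t] by (intro mult_pos_pos) auto
    moreover have "Yx (x t) (C t) = (1 - C t) * (dd - C t * k)" unfolding Yx_def k_def by (simp add: algebra_simps)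
    ultimately show ?thesis by simp
  qed
  define P where "P t = Xf (x t) (C t) * Yf (x t) (C t)" for t
  define g where "g t = Xx (x t) (C t) + Yc (x t) (C t)" for t
  define Q where "Q t = qt (x t) * (Yf (x t) (C t))^2 + Yx (x t) (C t) * (Xf (x t) (C t))^2" for t
  have dP': "(P has_real_derivative g t * P t + Q t) (at t)" for t
    using dP[of t] unfolding P_def g_def Q_def by (simp add: algebra_simps)
  have Qnn: "Q t \<ge> 0" for t
    unfolding Q_def using qpos[OF assms(1), of t] Yxpos[of t] by (simp add: add_nonneg_nonneg)
  have gcont: "isCont g t" for t
    unfolding g_def Xx_def Yc_def be_def et_def by (intro continuous_intros contx contC)
  define I where "I = {tM..tM+T}"
  have gcon: "continuous_on I g" using gcont by (simp add: continuous_at_imp_continuous_on)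
  define A where "A t = integral {tM..t} g" for t
  have dA: "(A has_real_derivative g t) (at t within I)" if "t \<in> I" for t
    unfolding A_def I_def using integral_has_real_derivative[OF gcon[unfolded I_def] that[unfolded I_def]] .
  define Z where "Z t = P t * exp (- A t)" for t
  have dZw: "(Z has_real_derivative (g t * P t + Q t) * exp (- A t) + P t * (exp (- A t) * (- g t))) (at t within I)"
    if "t \<in> I" for t
    unfolding Z_def
    by (rule derivative_eq_intros DERIV_subset[OF dP'] dA[OF that] | simp)+
  have Zcont: "continuous_on I Z"
    using dZw DERIV_continuous continuous_on_eq_continuous_within by blast
  have dZ: "\<exists>y. (Z has_real_derivative y) (at t) \<and> y \<ge> 0" if "tM < t" "t < tM + T" for t
  proof -
    have "t \<in> I" "at t within I = at t" using that unfolding I_def by (auto intro: at_within_Icc_at)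
    then have "(Z has_real_derivative Q t * exp (- A t)) (at t)"
      using dZw[of t] by (simp add: algebra_simps)
    then show ?thesis using Qnn[of t] by auto
  qed
  have Z1: "Z tM = 0" unfolding Z_def P_def using E(5) by simp
  have Z2: "Z (tM + T) = 0" unfolding Z_def P_def using E(5) perx perC by simp
  have Pz: "P t = 0" if "t \<in> I" for t
  proof -
    have "Z tM \<le> Z t"
      by (rule DERIV_nonneg_imp_increasing_open) (use that dZ Zcont in \<open>auto simp: I_def intro: continuous_on_subset\<close>)
    moreover have "Z t \<le> Z (tM + T)"
      by (rule DERIV_nonneg_imp_increasing_open) (use that dZ Zcont in \<open>auto simp: I_def intro: continuous_on_subset\<close>)
    ultimately have "Z t = 0" using Z1 Z2 by simp
    then show ?thesis unfolding Z_def by simp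
  qed
  have Pper: "\<forall>t. P (t + T) = P t" unfolding P_def using perx perC by simp
  have Pall: "P t = 0" for t
    using periodic_reduce[OF Pper Tpos, of tM t] Pz unfolding I_def by auto
  have "Q t = 0" for t
  proof -
    have "g t * P t + Q t = 0" by (rule deriv_at_max[OF dP']) (simp add: Pall)
    then show ?thesis using Pall by simp
  qed
  then have "Xf (x t) (C t) = 0 \<and> Yf (x t) (C t) = 0" for t
    using qpos[OF assms(1), of t] Yxpos[of t] unfolding Q_def
    by (smt (verit) mult_pos_pos zero_le_power2 zero_less_power2 mult_nonneg_nonneg)
  then show ?thesis using const_from_deriv0 by blast
qed


lemma psi_anti: assumes "DD \<ge> 0" "0 \<le> a" "a \<le> b" "b \<le> 1"
  shows "et b / be b \<le> et a / be a"
proof -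
  have pa: "be a > 0" and pb: "be b > 0" using be_pos assms by auto
  have "et a * be b - et b * be a = (b - a) * DD"
    by (simp add: et_def be_def DD_def dd_def algebra_simps)
  then have "et b * be a \<le> et a * be b" using assms by (smt (verit) mult_nonneg_nonneg)
  then show ?thesis using pa pb by (simp add: divide_simps mult.commute)
qed

lemma case_rot: assumes "dd > 0" "DD \<ge> 0" shows "x t = x s \<and> C t = C s"
proof -
  obtain tM tm sM sm where E: "\<forall>t. x t \<le> x tM" "\<forall>t. x tm \<le> x t" "\<forall>t. C t \<le> C sM"
    "\<forall>t. C sm \<le> C t" "Xf (x tM) (C tM) = 0" "Xf (x tm) (C tm) = 0"
    "Yf (x sM) (C sM) = 0" "Yf (x sm) (C sm) = 0" using extremes by blast
  define xm where "xm = x tm"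
  define xM where "xM = x tM"
  have xmM: "0 < xm" "xm \<le> xM" "xM < 1" using x0 x1 E(2) unfolding xm_def xM_def by auto
  define phi where "phi y = dd / rr y" for y
  define psi where "psi y = et y / be y" for y
  have rrM: "rr xM > 0"
  proof -
    have "C tM * rr xM = dd" using X0[OF E(5)] xM_def by simp
    then show ?thesis using assms C0[of tM] by (metis zero_less_mult_pos)
  qed
  have rrpos: "rr y > 0" if "0 < y" "y \<le> xM" for y
    using rr_anti[OF that xmM(3)] rrM by simp
  have phiC: "C t = phi (x t)" if "Xf (x t) (C t) = 0" for t
  proof -
    have "C t * rr (x t) = dd" using X0[OF that] .
    moreover have "rr (x t) \<noteq> 0" using assms calculation by auto
    ultimately show ?thesis unfolding phi_def by (simp add: field_simps)
  qed
  have psiC: "C t = psi (x t)" if "Yf (x t) (C t) = 0" for t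
  proof -
    have "C t * be (x t) = et (x t)" using Y0[OF that] .
    moreover have "be (x t) > 0" using be_pos x0[of t] x1[of t] by simp
    ultimately show ?thesis unfolding psi_def by (simp add: field_simps)
  qed
  have phi_mono: "phi a \<le> phi b" if "0 < a" "a \<le> b" "b \<le> xM" for a b
  proof -
    have "rr b \<le> rr a" using rr_anti[of a b] that xmM by simp
    moreover have "rr b > 0" using rrpos that by simp
    ultimately show ?thesis unfolding phi_def using assms by (simp add: divide_left_mono)
  qed
  have psi_mono: "psi b \<le> psi a" if "0 \<le> a" "a \<le> b" "b \<le> 1" for a b
    unfolding psi_def using psi_anti[OF assms(2) that] .
  have ycases: "0 < y \<and> y < 1 \<and> rr y > 0 \<and> be y > 0 \<and> qt y > 0" if "y \<in> {xm..xM}" for y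
  proof -
    have "0 < y" "y < 1" "rr y > 0" using that xmM rrpos by auto
    then show ?thesis using be_pos[of y] qt_rr[of y] by simp
  qed
  define f where "f y = phi y - psi y" for y
  have fcont: "continuous_on {xm..xM} f"
  proof (rule continuous_at_imp_continuous_on, rule ballI)
    fix y assume yin: "y \<in> {xm..xM}"
    have y: "0 < y" "y < 1" "rr y \<noteq> 0" "be y \<noteq> 0" using ycases[OF yin] by auto
    show "isCont f y" unfolding f_def[abs_def] phi_def psi_def
      by (intro continuous_intros isCont_rr isCont_be isCont_et y)
  qed
  have f1: "f xM \<ge> 0"
  proof -
    have "phi xM = C tM" using phiC[OF E(5)] xM_def by simp
    also have "C tM \<ge> C sm" using E(4) by simp
    also have "C sm = psi (x sm)" using psiC[OF E(8)] .
    also have "psi (x sm) \<ge> psi xM" using psi_mono[of "x sm" xM] x0[of sm] E(1) xmM xM_def by simp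
    finally show ?thesis unfolding f_def by simp
  qed
  have f2: "f xm \<le> 0"
  proof -
    have "phi xm = C tm" using phiC[OF E(6)] xm_def by simp
    also have "C tm \<le> C sM" using E(3) by simp
    also have "C sM = psi (x sM)" using psiC[OF E(7)] .
    also have "psi (x sM) \<le> psi xm" using psi_mono[of xm "x sM"] x1[of sM] E(2) xmM xm_def by simp
    finally show ?thesis unfolding f_def by simp
  qed
  obtain xs where xs: "xm \<le> xs" "xs \<le> xM" "f xs = 0"
    using IVT'[of f xm 0 xM, OF f2 f1 xmM(2) fcont] by blast
  define c0 where "c0 = phi xs"
  have c0psi: "psi xs = c0" using xs(3) unfolding f_def c0_def by simp
  have sgn: "(phi y - psi y) * (phi y - c0) \<ge> 0" if "y \<in> {xm..xM}" for y
  proof (cases "xs \<le> y")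
    case True
    then have "phi y \<ge> c0" "psi y \<le> c0"
      using phi_mono[of xs y] psi_mono[of xs y] that xs xmM c0_def c0psi by auto
    then show ?thesis by simp
  next
    case False
    then have "phi y \<le> c0" "psi y \<ge> c0"
      using phi_mono[of y xs] psi_mono[of y xs] that xs xmM c0_def c0psi by auto
    then show ?thesis by (simp add: mult_nonpos_nonpos)
  qed
  define m where "m y = be y * (2 * phi y - psi y - c0) / qt y" for y
  have mcont: "continuous_on {xm..xM} m"
  proof (rule continuous_at_imp_continuous_on, rule ballI)
    fix y assume yin: "y \<in> {xm..xM}"
    have y: "0 < y" "y < 1" "rr y \<noteq> 0" "be y \<noteq> 0" "qt y \<noteq> 0" using ycases[OF yin] by auto
    show "isCont m y" unfolding m_def[abs_def] phi_def psi_def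
      by (intro continuous_intros isCont_rr isCont_be isCont_et isCont_qt y)
  qed
  define H where "H y = integral {xm..y} m" for y
  have dH: "(H has_real_derivative m y) (at y within {xm..xM})" if "y \<in> {xm..xM}" for y
    unfolding H_def using integral_has_real_derivative[OF mcont that] .
  have xin: "x t \<in> {xm..xM}" for t using E(1,2) xm_def xM_def by auto
  have dHx: "((\<lambda>t. H (x t)) has_real_derivative m (x t) * Xf (x t) (C t)) (at t)" for t
  proof -
    have "(H has_real_derivative m (x t)) (at (x t) within range x)"
    proof (rule has_field_derivative_subset[OF dH[OF xin[of t]]])
      show "range x \<subseteq> {xm..xM}" using xin by blast
    qed
    from DERIV_image_chain[OF this dx[of t]] show ?thesis by (simp add: o_def)
  qed
  define Phi where "Phi t = - C t - (1 - c0) * ln (1 - C t) + H (x t)" for t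
  define Phi' where "Phi' t = - Yf (x t) (C t) - (1 - c0) * (inverse (1 - C t) * (0 - Yf (x t) (C t))) + m (x t) * Xf (x t) (C t)" for t
  have dPhi: "(Phi has_real_derivative Phi' t) (at t)" for t
  proof -
    have "1 - C t > 0" using C1[of t] by simp
    have dg: "((\<lambda>t. 1 - C t) has_real_derivative 0 - Yf (x t) (C t)) (at t)"
      by (rule DERIV_diff[OF DERIV_const dC])
    have dl: "((\<lambda>t. ln (1 - C t)) has_real_derivative inverse (1 - C t) * (0 - Yf (x t) (C t))) (at t)"
      by (rule DERIV_chain2[OF DERIV_ln[OF \<open>1 - C t > 0\<close>] dg])
    show ?thesis unfolding Phi_def[abs_def] Phi'_def
      by (rule DERIV_add[OF DERIV_diff[OF DERIV_minus[OF dC] DERIV_cmult[OF dl]] dHx])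
  qed
  have Phi'_eq: "Phi' t = - be (x t) * ((C t - phi (x t))^2 + (phi (x t) - psi (x t)) * (phi (x t) - c0))" for t
  proof -
    obtain y c where yc: "y = x t" "c = C t" by blast
    have y: "0 < y" "y < 1" "rr y > 0" "be y > 0" "qt y > 0" using ycases[OF xin[of t]] yc by auto
    have c: "c < 1" using C1 yc by simp
    have e1: "- Yf y c - (1 - c0) * (inverse (1 - c) * (0 - Yf y c)) = - (c - c0) * (c * be y - et y)"
      using c by (simp add: Yf_def field_simps)
    have e2: "et y = be y * psi y" unfolding psi_def using y by simp
    have e3: "dd * y * (1 - y) = qt y * phi y" unfolding phi_def using y qt_rr[of y] by simp
    have e4: "m y * Xf y c = be y * (2 * phi y - psi y - c0) * (c - phi y)"
      unfolding m_def Xf_def e3 using y by (simp add: field_simps)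
    have "Phi' t = - (c - c0) * (c * be y - be y * psi y) + be y * (2 * phi y - psi y - c0) * (c - phi y)"
      unfolding Phi'_def yc[symmetric] e1 e4 e2 by simp
    also have "\<dots> = - be y * ((c - phi y)^2 + (phi y - psi y) * (phi y - c0))"
      by (simp add: power2_eq_square algebra_simps)
    finally show ?thesis using yc by simp
  qed
  have Phi'_le: "Phi' t \<le> 0" for t
  proof -
    have "be (x t) > 0" using ycases[OF xin[of t]] by simp
    moreover have "(C t - phi (x t))^2 + (phi (x t) - psi (x t)) * (phi (x t) - c0) \<ge> 0"
      using sgn[OF xin[of t]] by (simp add: add_nonneg_nonneg)
    ultimately show ?thesis unfolding Phi'_eq by (simp add: mult_nonneg_nonneg)
  qed
  have Phiper: "\<forall>t. Phi (t + T) = Phi t" unfolding Phi_def using perx perC by simp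
  have Phic: "Phi t = Phi u" for t u using periodic_const[OF Phiper Tpos dPhi] Phi'_le by blast
  have X0all: "Xf (x t) (C t) = 0" for t
  proof -
    have "\<forall>s. Phi s \<le> Phi t" using Phic by (metis order_refl)
    then have "Phi' t = 0" by (rule deriv_at_max[OF dPhi])
    moreover have "be (x t) > 0" using ycases[OF xin[of t]] by simp
    ultimately have "(C t - phi (x t))^2 + (phi (x t) - psi (x t)) * (phi (x t) - c0) = 0"
      unfolding Phi'_eq by simp
    then have "(C t - phi (x t))^2 = 0" using sgn[OF xin[of t]] by (smt (verit) zero_le_power2)
    then have "C t = phi (x t)" by simp
    moreover have "dd * x t * (1 - x t) = qt (x t) * phi (x t)"
      unfolding phi_def using ycases[OF xin[of t]] qt_rr[of "x t"] by simp
    ultimately show ?thesis unfolding Xf_def by (simp add: algebra_simps)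
  qed
  have xc: "x t = x u" for t u using DERIV_isconst_all[of x t u] dx X0all by metis
  have "C t = C u" for t u
  proof -
    have "C t * rr (x t) = dd" "C u * rr (x u) = dd" using X0[OF X0all] by auto
    then have "C t * rr (x t) = C u * rr (x t)" using xc[of t u] by simp
    moreover have "rr (x t) > 0" using ycases[OF xin[of t]] by simp
    ultimately show ?thesis by simp
  qed
  then show ?thesis using xc by blast
qed

lemma orbit_const: "x t = x s \<and> C t = C s"
  using case_d0 case_coop case_rot dd_nonneg by (cases "dd = 0"; cases "DD < 0") auto

end


lemma no_orbit_aux:
  fixes aL aR muL muR gRL gLR :: real
  assumes "aL > 0" "aR > 0" "muL > 0" "muR > 0" "gRL > 0" "gLR > 0" "muR \<le> muL"
    and orb: "closed_orbit_in_interior aL aR muL muR gRL gLR L R"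
  shows False
proof -
  interpret redsys aL aR muL muR gRL gLR by unfold_locales (use assms in auto)
  obtain T where dL: "\<And>t. (L has_real_derivative fieldL aL muL gRL (L t) (R t)) (at t)"
    and dR: "\<And>t. (R has_real_derivative fieldR aR muR gLR (L t) (R t)) (at t)"
    and T: "T > 0" "\<forall>t. L (t + T) = L t \<and> R (t + T) = R t"
    and ne: "\<exists>t1 t2. (L t1, R t1) \<noteq> (L t2, R t2)"
    and int: "\<And>t. in_simplex_interior (L t) (R t)"
    using orb unfolding closed_orbit_in_interior_def by blast
  define x where "x t = L t / (L t + R t)" for t
  define C where "C t = 1 - L t - R t" for t
  have ints: "0 < L t" "0 < R t" "L t + R t < 1" for t using int[of t] by (auto simp: in_simplex_interior_def)
  have dx: "(x has_real_derivative Xf (x t) (C t)) (at t)" for t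
  proof -
    have S: "L t + R t \<noteq> 0" using ints[of t] by simp
    have "(x has_real_derivative (fieldL aL muL gRL (L t) (R t) * (L t + R t) - L t * (fieldL aL muL gRL (L t) (R t) + fieldR aR muR gLR (L t) (R t))) / ((L t + R t) * (L t + R t))) (at t)"
      unfolding x_def[abs_def] by (rule DERIV_divide[OF dL DERIV_add[OF dL dR] S])
    then show ?thesis unfolding field_x[OF S] x_def C_def .
  qed
  have dC: "(C has_real_derivative Yf (x t) (C t)) (at t)" for t
  proof -
    have S: "L t + R t \<noteq> 0" using ints[of t] by simp
    have "(C has_real_derivative 0 - fieldL aL muL gRL (L t) (R t) - fieldR aR muR gLR (L t) (R t)) (at t)"
      unfolding C_def[abs_def] by (rule DERIV_diff DERIV_const dL dR)+
    then show ?thesis using field_C[OF S] unfolding x_def C_def by simp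
  qed
  interpret orb aL aR muL muR gRL gLR x C T
  proof
    show "\<And>t. (x has_real_derivative Xf (x t) (C t)) (at t)" by (rule dx)
    show "\<And>t. (C has_real_derivative Yf (x t) (C t)) (at t)" by (rule dC)
    show "T > 0" by (rule T(1))
    show "\<forall>t. x (t + T) = x t" "\<forall>t. C (t + T) = C t" using T(2) by (auto simp: x_def C_def)
    fix t
    show "0 < x t" "x t < 1" using ints[of t] by (auto simp: x_def field_simps)
    show "0 < C t" "C t < 1" using ints[of t] by (auto simp: C_def)
  qed
  have LR: "L t = x t * (1 - C t)" "R t = (1 - x t) * (1 - C t)" for t
    using ints[of t] by (auto simp: x_def C_def field_simps)
  obtain t1 t2 where "(L t1, R t1) \<noteq> (L t2, R t2)" using ne by blast
  moreover have "L t1 = L t2" "R t1 = R t2" using LR orbit_const[of t1 t2] by metis+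
  ultimately show False by simp
qed

theorem corollary3p10:
  fixes aL aR muL muR gRL gLR :: real
  assumes "aL > 0" "aR > 0" "muL > 0" "muR > 0" "gRL > 0" "gLR > 0"
  shows "\<not> (\<exists>L R. closed_orbit_in_interior aL aR muL muR gRL gLR L R)"
proof
  assume "\<exists>L R. closed_orbit_in_interior aL aR muL muR gRL gLR L R"
  then obtain L R where o: "closed_orbit_in_interior aL aR muL muR gRL gLR L R" by blast
  show False
  proof (cases "muR \<le> muL")
    case True
    show False by (rule no_orbit_aux[OF assms True o])
  next
    case False
    have "closed_orbit_in_interior aR aL muR muL gLR gRL R L"
      using o unfolding closed_orbit_in_interior_def in_simplex_interior_def fieldL_def fieldR_def
      by (auto simp: algebra_simps)
    then show False using no_orbit_aux[of aR aL muR muL gLR gRL R L] assms False by simp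
  qed
qed

end
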